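(* Let $S=\{x_0x_2x_3=x_1^3\}\subset\mathbb P^3$ be the cubic surface with three $\boldsymbol A_2$ singularities, and consider the GIT quotient $\mathbb P(H^0(S,-K_S))^{ss}/\!\!/\mathrm{Aut}(S)$ for the natural linear action described in the context (the linearisation with $a=b=0$). Let $D\in|-K_S|\cong\mathbb P(H^0(S,-K_S))$. Then: (1) $D$ is stable if and only if $D\cap\mathrm{Sing}(S)=\emptyset$; (2) $D$ is polystable but not stable if and only if $D=H_*$, the union of the unique three lines in $S$ which contain the three $\boldsymbol A_2$ singularities; (3) $D$ is unstable if and only if $D$ is either a cuspidal plane cubic curve with $\mathrm{Sing}(D)\cap\mathrm{Sing}(S)\neq\emptyset$ or a triple line.
   Context: $H^0(S,-K_S)=H^0(S,\mathcal O_S(1))$ has basis $x_0,x_1,x_2,x_3$. $\mathrm{Aut}(S)\cong(\mathbb C^* )^2\rtimes\Sigma_3$, where $(t_0,t_2)\in(\mathbb C^* )^2$ acts by $(t_0,t_2)\cdot[x_0,x_1,x_2,x_3]=[t_0x_0,x_1,t_2x_2,t_0^{-1}t_2^{-1}x_3]$ and $\Sigma_3$ acts by permuting $x_0,x_2,x_3$. The linearisation "$a=b=0$" is this linear representation on $H^0(S,\mathcal O_S(1))$ with no twist by a character (a general twist would multiply by $t_0^{-a}t_2^{-b}$). $H_*=\{x_1=0\}|_S$. *)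

theory Defs
  imports "HOL-Analysis.Analysis" "HOL-Combinatorics.Permutations"
begin

text \<open>Vectors in C^4 = H^0(S,O_S(1)) (coefficients of linear forms
  a0 x0 + a1 x1 + a2 x2 + a3 x3) and also points of the affine cone over P^3.
  Index type 4 with indices 0,1,2,3 corresponding to x0,x1,x2,x3.\<close>

definition lf :: "complex^4 \<Rightarrow> complex^4 \<Rightarrow> complex" where
  "lf a x = (\<Sum>i\<in>UNIV. a $ i * x $ i)"

definition Fcub :: "complex^4 \<Rightarrow> complex" where
  "Fcub x = x $ 0 * x $ 2 * x $ 3 - (x $ 1) ^ 3"

definition gradF :: "complex^4 \<Rightarrow> complex^4" where
  "gradF x = (\<chi> i. if i = 0 then x $ 2 * x $ 3
                  else if i = 1 then - 3 * (x $ 1) ^ 2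
                  else if i = 2 then x $ 0 * x $ 3
                  else x $ 0 * x $ 2)"

definition singS :: "(complex^4) set" where
  "singS = {x. Fcub x = 0 \<and> gradF x = 0}"

text \<open>Affine cone over Sing(D), D = S \<inter> {l_a = 0} viewed as a plane cubic in the
  plane {l_a = 0}: points of the plane where F and the derivative of F restricted
  to the plane vanish.\<close>
definition singD :: "complex^4 \<Rightarrow> (complex^4) set" where
  "singD a = {x. lf a x = 0 \<and> Fcub x = 0 \<and>
                 (\<forall>v. lf a v = 0 \<longrightarrow> lf (gradF x) v = 0)}"

text \<open>Linear coordinates (u0:u1:u2) on the plane {l_a = 0} in P^3.\<close>
definition plane_chart :: "complex^4 \<Rightarrow> (complex^3)^4 \<Rightarrow> bool" where
  "plane_chart a M \<longleftrightarrow> inj (\<lambda>u. M *v u) \<and> range (\<lambda>u. M *v u) = {x. lf a x = 0}"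

definition cuspidal_section :: "complex^4 \<Rightarrow> bool" where
  "cuspidal_section a \<longleftrightarrow> (\<exists>M c. plane_chart a M \<and> c \<noteq> 0 \<and>
      (\<forall>u. Fcub (M *v u) = c * ((u $ 1) ^ 2 * u $ 2 - (u $ 0) ^ 3)))"

definition triple_line_section :: "complex^4 \<Rightarrow> bool" where
  "triple_line_section a \<longleftrightarrow> (\<exists>M c. plane_chart a M \<and> c \<noteq> 0 \<and>
      (\<forall>u. Fcub (M *v u) = c * (u $ 0) ^ 3))"

text \<open>Action of Aut(S) = (C^*)^2 \<rtimes> S_3 on H^0(S,O_S(1)), linearisation a=b=0:
  (t0,t2) scales x0,x1,x2,x3 by t0,1,t2,(t0 t2)^-1; sigma permutes x0,x2,x3.\<close>
definition tscale :: "complex \<Rightarrow> complex \<Rightarrow> 4 \<Rightarrow> complex" where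
  "tscale t0 t2 i = (if i = 0 then t0 else if i = 1 then 1 else if i = 2 then t2
                     else inverse (t0 * t2))"

definition AutS :: "(complex \<times> complex \<times> (4 \<Rightarrow> 4)) set" where
  "AutS = {(t0, t2, \<sigma>). t0 \<noteq> 0 \<and> t2 \<noteq> 0 \<and> \<sigma> permutes {0, 2, 3}}"

definition act :: "complex \<times> complex \<times> (4 \<Rightarrow> 4) \<Rightarrow> complex^4 \<Rightarrow> complex^4" where
  "act g v = (case g of (t0, t2, \<sigma>) \<Rightarrow> (\<chi> i. tscale t0 t2 i * v $ (inv \<sigma> i)))"

definition orbit :: "complex^4 \<Rightarrow> (complex^4) set" where
  "orbit v = (\<lambda>g. act g v) ` AutS"

definition stabilizer :: "complex^4 \<Rightarrow> (complex \<times> complex \<times> (4 \<Rightarrow> 4)) set" where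
  "stabilizer v = {g \<in> AutS. act g v = v}"

text \<open>GIT notions for the point [v] of P(H^0) (v \<noteq> 0 a lift), via the affine cone.\<close>
definition git_semistable :: "complex^4 \<Rightarrow> bool" where
  "git_semistable v \<longleftrightarrow> v \<noteq> 0 \<and> 0 \<notin> closure (orbit v)"

definition git_unstable :: "complex^4 \<Rightarrow> bool" where
  "git_unstable v \<longleftrightarrow> v \<noteq> 0 \<and> \<not> git_semistable v"

definition git_polystable :: "complex^4 \<Rightarrow> bool" where
  "git_polystable v \<longleftrightarrow> v \<noteq> 0 \<and> closed (orbit v)"

definition git_stable :: "complex^4 \<Rightarrow> bool" where
  "git_stable v \<longleftrightarrow> git_polystable v \<and> finite (stabilizer v)"

text \<open>H_* = {x1 = 0}|_S.\<close>
definition Hstar :: "complex^4" where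
  "Hstar = axis 1 1"

end

theory Submission
  imports Defs
begin


lemma UNIV4: "(UNIV::4 set) = {0,1,2,3}" using UNIV_4 by auto
lemma UNIV3: "(UNIV::3 set) = {0,1,2}" using UNIV_3 by auto
lemma cases4: "(i::4) = 0 \<or> i = 1 \<or> i = 2 \<or> i = 3" using UNIV4 by auto
lemma lf4: "lf a x = a$0*x$0 + a$1*x$1 + a$2*x$2 + a$3*x$3"
  unfolding lf_def UNIV4 by (simp add: algebra_simps)
lemma mv3: "((M::complex^3^4) *v u)$i = M$i$0*u$0 + M$i$1*u$1 + M$i$2*u$2"
  unfolding matrix_vector_mult_def UNIV3 by (simp add: algebra_simps)
lemma cases3: "(i::3) = 0 \<or> i = 1 \<or> i = 2" using UNIV3 by auto
lemma vec4_eq: "(x::'a^4) = y \<longleftrightarrow> x$0=y$0 \<and> x$1 = y$1 \<and> x$2=y$2 \<and> x$3=y$3"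
proof
  assume h: "x$0=y$0 \<and> x$1 = y$1 \<and> x$2=y$2 \<and> x$3=y$3"
  show "x = y" unfolding vec_eq_iff
  proof
    fix i :: 4 show "x$i = y$i" using cases4[of i] h by auto
  qed
qed simp
lemma vec3_eq: "(x::'a^3) = y \<longleftrightarrow> x$0=y$0 \<and> x$1 = y$1 \<and> x$2=y$2"
proof
  assume h: "x$0=y$0 \<and> x$1 = y$1 \<and> x$2=y$2"
  show "x = y" unfolding vec_eq_iff
  proof
    fix i :: 3 show "x$i = y$i" using cases3[of i] h by auto
  qed
qed simp

lemma act_nth: "act (t0,t2,s) v $ i = tscale t0 t2 i * v $ (inv s i)"
  by (simp add: act_def)

lemma tscale_nz: "t0 \<noteq> 0 \<Longrightarrow> t2 \<noteq> 0 \<Longrightarrow> tscale t0 t2 i \<noteq> 0"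
  by (simp add: tscale_def)

lemma AutS_D: "g \<in> AutS \<Longrightarrow> \<exists>t0 t2 s. g = (t0,t2,s) \<and> t0 \<noteq> 0 \<and> t2 \<noteq> 0 \<and> s permutes {0,2,3}"
  by (auto simp: AutS_def)

lemma act_1: assumes "g \<in> AutS" shows "act g v $ 1 = v $ 1"
proof -
  obtain t0 t2 s where g: "g = (t0,t2,s)" "s permutes {0,2,3}" using AutS_D[OF assms] by blast
  have "inv s permutes {0,2,3}" using g(2) by (rule permutes_inv)
  then have "inv s 1 = 1" by (rule permutes_not_in) simp
  then show ?thesis by (simp add: g act_nth tscale_def)
qed

lemma act_prod: assumes "g \<in> AutS"
  shows "act g v $ 0 * act g v $ 2 * act g v $ 3 = v$0 * v$2 * v$3"
proof -
  obtain t0 t2 s where g: "g = (t0,t2,s)" "t0 \<noteq> 0" "t2 \<noteq> 0" "s permutes {0,2,3}" using AutS_D[OF assms] by blast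
  have p: "inv s permutes {0,2,3}" using g(4) by (rule permutes_inv)
  have "(\<Prod>i\<in>{0,2,3::4}. v$i) = (\<Prod>i\<in>{0,2,3::4}. v$(inv s i))"
    using prod.permute[OF p, of "\<lambda>i. v$i"] by (simp add: comp_def)
  then have e: "v$0 * v$2 * v$3 = v$(inv s 0) * v$(inv s 2) * v$(inv s 3)" by (simp add: mult.assoc)
  show ?thesis using g(2,3) unfolding g(1) act_nth e by (simp add: tscale_def field_simps)
qed

lemma act_card: assumes "g \<in> AutS"
  shows "card {i. act g v $ i \<noteq> 0} = card {i. v $ i \<noteq> 0}"
proof -
  obtain t0 t2 s where g: "g = (t0,t2,s)" "t0 \<noteq> 0" "t2 \<noteq> 0" "s permutes {0,2,3}" using AutS_D[OF assms] by blast
  have "{i. act g v $ i \<noteq> 0} = s ` {i. v $ i \<noteq> 0}"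
  proof -
    have "{i. act g v $ i \<noteq> 0} = {i. v $ (inv s i) \<noteq> 0}"
      using tscale_nz[OF g(2,3)] by (auto simp: g(1) act_nth)
    also have "\<dots> = s ` {i. v $ i \<noteq> 0}"
      using permutes_inverses[OF g(4)] by (auto simp: image_iff) (metis)
    finally show ?thesis .
  qed
  then show ?thesis using permutes_inj[OF g(4)] by (simp add: card_image inj_on_def)
qed

lemma act_nz: assumes "g \<in> AutS" "v \<noteq> 0" shows "act g v \<noteq> 0"
proof
  assume "act g v = 0"
  then have "card {i. act g v $ i \<noteq> 0} = 0" by simp
  then have "card {i. v $ i \<noteq> 0} = 0" using act_card[OF assms(1)] by simp
  then have "{i. v $ i \<noteq> 0} = {}" by simp
  then show False using assms(2) by (simp add: vec_eq_iff)
qed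

lemma cont_nth: "continuous_on UNIV (\<lambda>x::complex^4. x $ i)"
  by (rule linear_continuous_on[OF bounded_linear_vec_nth])

lemma closed_inv: "closed {y::complex^4. y$1 = c \<and> y$0*y$2*y$3 = d}"
  by (intro closed_Collect_conj closed_Collect_eq continuous_on_mult cont_nth continuous_on_const)

definition Stab :: "complex^4 \<Rightarrow> bool" where "Stab a \<longleftrightarrow> a$0 \<noteq> 0 \<and> a$2 \<noteq> 0 \<and> a$3 \<noteq> 0"

lemma orbit_Stab: assumes "Stab a"
  shows "orbit a = {y. y$1 = a$1 \<and> y$0*y$2*y$3 = a$0*a$2*a$3}"
proof
  show "orbit a \<subseteq> {y. y$1 = a$1 \<and> y$0*y$2*y$3 = a$0*a$2*a$3}"
    unfolding orbit_def using act_1 act_prod by auto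
  show "{y. y$1 = a$1 \<and> y$0*y$2*y$3 = a$0*a$2*a$3} \<subseteq> orbit a"
  proof safe
    fix y :: "complex^4" assume y: "y$1 = a$1" "y$0*y$2*y$3 = a$0*a$2*a$3"
    have nz: "y$0 \<noteq> 0" "y$2 \<noteq> 0" using y(2) assms by (auto simp: Stab_def)
    let ?g = "(y$0/a$0, y$2/a$2, id :: 4 \<Rightarrow> 4)"
    have g: "?g \<in> AutS" using nz assms by (simp add: AutS_def Stab_def)
    have "act ?g a = y" using nz assms y
      unfolding vec4_eq act_nth by (simp add: tscale_def Stab_def field_simps)
    then show "y \<in> orbit a" using g unfolding orbit_def by force
  qed
qed

lemma stab_finite: assumes "Stab a" shows "finite (stabilizer a)"
proof -
  have "stabilizer a \<subseteq> range (\<lambda>j. a$0 / a$j) \<times> range (\<lambda>j. a$2 / a$j) \<times> {s. s permutes {0,2,3}}"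
  proof
    fix g assume "g \<in> stabilizer a"
    then have gA: "g \<in> AutS" and e: "act g a = a" by (auto simp: stabilizer_def)
    obtain t0 t2 s where g: "g = (t0,t2,s)" "t0 \<noteq> 0" "t2 \<noteq> 0" "s permutes {0,2,3}" using AutS_D[OF gA] by blast
    have e0: "t0 * a $ (inv s 0) = a$0" using arg_cong[OF e, of "\<lambda>v. v$0"] by (simp add: g act_nth tscale_def)
    have e2: "t2 * a $ (inv s 2) = a$2" using arg_cong[OF e, of "\<lambda>v. v$2"] by (simp add: g act_nth tscale_def)
    have n0: "a$(inv s 0) \<noteq> 0" using e0 assms by (auto simp: Stab_def)
    have n2: "a$(inv s 2) \<noteq> 0" using e2 assms by (auto simp: Stab_def)
    have "t0 = a$0 / a$(inv s 0)" using e0 n0 by (simp add: eq_divide_eq)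
    moreover have "t2 = a$2 / a$(inv s 2)" using e2 n2 by (simp add: eq_divide_eq)
    ultimately show "g \<in> range (\<lambda>j. a$0 / a$j) \<times> range (\<lambda>j. a$2 / a$j) \<times> {s. s permutes {0,2,3}}"
      using g by auto
  qed
  moreover have "finite (range (\<lambda>j::4. a$0 / a$j) \<times> range (\<lambda>j::4. a$2 / a$j) \<times> {s. s permutes {0,2,3::4}})"
    by (intro finite_cartesian_product finite_imageI finite_permutations) auto
  ultimately show ?thesis by (rule finite_subset)
qed

lemma Stab_stable: assumes "Stab a" "a \<noteq> 0" shows "git_stable a"
proof -
  have "closed (orbit a)" unfolding orbit_Stab[OF assms(1)] by (rule closed_inv)
  then show ?thesis unfolding git_stable_def git_polystable_def using assms(2) stab_finite[OF assms(1)] by blast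
qed



lemma inv_lim: "(\<lambda>n. c * inverse (of_nat (Suc n)::complex)) \<longlonglongrightarrow> 0"
proof -
  have "(\<lambda>n. complex_of_real (inverse (real (Suc n)))) \<longlonglongrightarrow> complex_of_real 0"
    by (rule tendsto_of_real[OF LIMSEQ_inverse_real_of_nat])
  then have "(\<lambda>n. inverse (of_nat (Suc n)::complex)) \<longlonglongrightarrow> 0" by simp
  then show ?thesis by (rule tendsto_mult_right_zero)
qed

definition lim_b :: "complex^4 \<Rightarrow> complex^4" where "lim_b a = (\<chi> i. if i = 1 then a$1 else 0)"

lemma conv_lemma: assumes "\<And>n. f n $ 1 = a$1"
  "\<And>i. i \<noteq> 1 \<Longrightarrow> \<exists>c. \<forall>n. f n $ i = c * inverse (of_nat (Suc n)::complex)"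
  shows "f \<longlonglongrightarrow> lim_b a"
proof (rule vec_tendstoI)
  fix i :: 4
  show "((\<lambda>n. f n $ i) \<longlonglongrightarrow> lim_b a $ i)"
  proof (cases "i = 1")
    case True then show ?thesis using assms(1) by (simp add: lim_b_def)
  next
    case False
    then obtain c where c: "\<forall>n. f n $ i = c * inverse (of_nat (Suc n)::complex)" using assms(2) by blast
    have "(\<lambda>n. f n $ i) = (\<lambda>n. c * inverse (of_nat (Suc n)))" using c by auto
    moreover have "lim_b a $ i = 0" using False by (simp add: lim_b_def)
    ultimately show ?thesis using inv_lim[of c] by simp
  qed
qed

lemma lim_closure: assumes "\<not> Stab a" shows "lim_b a \<in> closure (orbit a)"
proof -
  define r where "r n = (of_nat (Suc n)::complex)" for n
  have rnz: "r n \<noteq> 0" for n unfolding r_def by (simp del: of_nat_Suc)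
  have idp: "(id::4\<Rightarrow>4) permutes {0,2,3}" by simp
  have main: "lim_b a \<in> closure (orbit a)" if
     nz: "\<And>n. t0 n \<noteq> 0" "\<And>n. t2 n \<noteq> 0" and
     c0: "\<exists>c. \<forall>n. act (t0 n, t2 n, id) a $ 0 = c * inverse (r n)" and
     c2: "\<exists>c. \<forall>n. act (t0 n, t2 n, id) a $ 2 = c * inverse (r n)" and
     c3: "\<exists>c. \<forall>n. act (t0 n, t2 n, id) a $ 3 = c * inverse (r n)"
    for t0 t2
  proof -
    have c1: "\<And>n. act (t0 n, t2 n, id) a $ 1 = a$1" by (simp add: act_nth tscale_def)
    have "(\<lambda>n. act (t0 n, t2 n, id) a) \<longlonglongrightarrow> lim_b a"
    proof (rule conv_lemma[OF c1])
      fix i :: 4 assume "i \<noteq> 1"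
      then have "i = 0 \<or> i = 2 \<or> i = 3" using cases4 by blast
      then show "\<exists>c. \<forall>n. act (t0 n, t2 n, id) a $ i = c * inverse (of_nat (Suc n))"
        using c0 c2 c3 unfolding r_def by blast
    qed
    moreover have "\<forall>n. act (t0 n, t2 n, id) a \<in> orbit a"
    proof
      fix n
      have "(t0 n, t2 n, id) \<in> AutS" using nz idp by (simp add: AutS_def)
      then show "act (t0 n, t2 n, id) a \<in> orbit a" unfolding orbit_def by (rule imageI)
    qed
    ultimately show ?thesis unfolding closure_sequential by (intro exI[of _ "\<lambda>n. act (t0 n, t2 n, id) a"]) simp
  qed
  from assms consider "a$0 = 0" | "a$2 = 0" | "a$3 = 0" unfolding Stab_def by blast
  then show ?thesis
  proof cases
    case 1
    show ?thesis
    proof (rule main[of "\<lambda>n. r n ^ 2" "\<lambda>n. inverse (r n)"])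
      show "\<exists>c. \<forall>n. act (r n ^ 2, inverse (r n), id) a $ 0 = c * inverse (r n)"
        by (rule exI[of _ 0]) (simp add: act_nth tscale_def 1)
      show "\<exists>c. \<forall>n. act (r n ^ 2, inverse (r n), id) a $ 2 = c * inverse (r n)"
        by (rule exI[of _ "a$2"]) (simp add: act_nth tscale_def)
      show "\<exists>c. \<forall>n. act (r n ^ 2, inverse (r n), id) a $ 3 = c * inverse (r n)"
        by (rule exI[of _ "a$3"]) (simp add: act_nth tscale_def rnz power2_eq_square field_simps)
    qed (simp_all add: rnz)
  next
    case 2
    show ?thesis
    proof (rule main[of "\<lambda>n. inverse (r n)" "\<lambda>n. r n ^ 2"])
      show "\<exists>c. \<forall>n. act (inverse (r n), r n ^ 2, id) a $ 0 = c * inverse (r n)"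
        by (rule exI[of _ "a$0"]) (simp add: act_nth tscale_def)
      show "\<exists>c. \<forall>n. act (inverse (r n), r n ^ 2, id) a $ 2 = c * inverse (r n)"
        by (rule exI[of _ 0]) (simp add: act_nth tscale_def 2)
      show "\<exists>c. \<forall>n. act (inverse (r n), r n ^ 2, id) a $ 3 = c * inverse (r n)"
        by (rule exI[of _ "a$3"]) (simp add: act_nth tscale_def rnz power2_eq_square field_simps)
    qed (simp_all add: rnz)
  next
    case 3
    show ?thesis
    proof (rule main[of "\<lambda>n. inverse (r n)" "\<lambda>n. inverse (r n)"])
      show "\<exists>c. \<forall>n. act (inverse (r n), inverse (r n), id) a $ 0 = c * inverse (r n)"
        by (rule exI[of _ "a$0"]) (simp add: act_nth tscale_def)
      show "\<exists>c. \<forall>n. act (inverse (r n), inverse (r n), id) a $ 2 = c * inverse (r n)"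
        by (rule exI[of _ "a$2"]) (simp add: act_nth tscale_def)
      show "\<exists>c. \<forall>n. act (inverse (r n), inverse (r n), id) a $ 3 = c * inverse (r n)"
        by (rule exI[of _ 0]) (simp add: act_nth tscale_def 3)
    qed (simp_all add: rnz)
  qed
qed




lemma Hst_orbit: assumes "a$0 = 0" "a$2 = 0" "a$3 = 0" shows "orbit a = {a}"
proof -
  have "act g a = a" if gA: "g \<in> AutS" for g
  proof -
    obtain t0 t2 s where g: "g = (t0,t2,s)" "s permutes {0,2,3}" using AutS_D[OF gA] by blast
    have p: "inv s permutes {0,2,3}" using g(2) by (rule permutes_inv)
    have z: "a $ (inv s i) = 0" if "i \<noteq> 1" for i
    proof -
      have "i \<in> {0,2,3}" using cases4[of i] that by auto
      then have "inv s i \<in> {0,2,3}" using permutes_in_image[OF p] by blast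
      then show ?thesis using assms by auto
    qed
    show ?thesis unfolding vec4_eq using act_1[OF gA, of a] z by (simp add: g(1) act_nth assms)
  qed
  moreover have "(1,1,id) \<in> AutS" by (simp add: AutS_def)
  ultimately show ?thesis unfolding orbit_def by force
qed

lemma AutS_infinite: "infinite AutS"
proof
  assume f: "finite AutS"
  have "(\<lambda>t::complex. (t, 1::complex, id::4\<Rightarrow>4)) ` (UNIV - {0}) \<subseteq> AutS"
  proof
    fix x assume "x \<in> (\<lambda>t::complex. (t, 1::complex, id::4\<Rightarrow>4)) ` (UNIV - {0})"
    then obtain t where "t \<noteq> 0" "x = (t, 1, id)" by blast
    then show "x \<in> AutS" by (simp add: AutS_def)
  qed
  then have "finite ((\<lambda>t::complex. (t, 1::complex, id::4\<Rightarrow>4)) ` (UNIV - {0}))" using f finite_subset by blast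
  moreover have "inj_on (\<lambda>t::complex. (t, 1::complex, id::4\<Rightarrow>4)) (UNIV - {0})" by (auto simp: inj_on_def)
  ultimately have "finite (UNIV - {0::complex})" using finite_imageD by blast
  moreover have "infinite (UNIV - {0::complex})" by (simp add: infinite_UNIV_char_0)
  ultimately show False by blast
qed

lemma Hst_not_stable: assumes "a$0 = 0" "a$2 = 0" "a$3 = 0" shows "infinite (stabilizer a)"
proof -
  have "stabilizer a = AutS" using Hst_orbit[OF assms] unfolding stabilizer_def orbit_def by auto
  then show ?thesis using AutS_infinite by simp
qed

lemma not_closed: assumes "\<not> Stab a" "a$0 \<noteq> 0 \<or> a$2 \<noteq> 0 \<or> a$3 \<noteq> 0" shows "\<not> closed (orbit a)"
proof
  assume c: "closed (orbit a)"
  have "lim_b a \<in> orbit a" using lim_closure[OF assms(1)] c closure_closed by metis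
  then obtain g where g: "g \<in> AutS" "lim_b a = act g a" unfolding orbit_def by blast
  have e: "card {i. lim_b a $ i \<noteq> 0} = card {i. a $ i \<noteq> 0}" using act_card[OF g(1)] g(2) by simp
  have d: "(0::4) \<noteq> 1" "(2::4) \<noteq> 1" "(3::4) \<noteq> 1" by simp_all
  have "\<exists>j::4. j \<noteq> 1 \<and> a$j \<noteq> 0" using assms(2) d by blast
  then obtain j where j: "j \<noteq> 1" "a$j \<noteq> 0" by blast
  have "{i. lim_b a $ i \<noteq> 0} \<subset> {i. a $ i \<noteq> 0}"
  proof
    show "{i. lim_b a $ i \<noteq> 0} \<subseteq> {i. a $ i \<noteq> 0}" by (auto simp: lim_b_def split: if_splits)
    show "{i. lim_b a $ i \<noteq> 0} \<noteq> {i. a $ i \<noteq> 0}"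
    proof
      assume "{i. lim_b a $ i \<noteq> 0} = {i. a $ i \<noteq> 0}"
      then have "lim_b a $ j \<noteq> 0" using j by blast
      then show False using j by (simp add: lim_b_def)
    qed
  qed
  then have "card {i. lim_b a $ i \<noteq> 0} < card {i. a $ i \<noteq> 0}" by (rule psubset_card_mono[rotated]) simp
  then show False using e by simp
qed

definition Uns :: "complex^4 \<Rightarrow> bool" where
  "Uns a \<longleftrightarrow> a$1 = 0 \<and> (a$0 = 0 \<or> a$2 = 0 \<or> a$3 = 0)"

lemma unstable_iff: assumes "a \<noteq> 0" shows "git_unstable a \<longleftrightarrow> Uns a"
proof -
  have "0 \<in> closure (orbit a) \<longleftrightarrow> Uns a"
  proof
    assume u: "Uns a"
    then have "\<not> Stab a" by (auto simp: Uns_def Stab_def)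
    moreover have "lim_b a = 0" using u by (simp add: Uns_def lim_b_def vec_eq_iff)
    ultimately show "0 \<in> closure (orbit a)" using lim_closure by metis
  next
    assume z: "0 \<in> closure (orbit a)"
    show "Uns a"
    proof (rule ccontr)
      assume n: "\<not> Uns a"
      show False
      proof (cases "a$1 = 0")
        case False
        have cl: "closed {y::complex^4. y$1 = a$1}"
          by (intro closed_Collect_eq cont_nth continuous_on_const)
        have "orbit a \<subseteq> {y::complex^4. y$1 = a$1}" unfolding orbit_def using act_1 by auto
        then have "closure (orbit a) \<subseteq> {y::complex^4. y$1 = a$1}" using cl by (rule closure_minimal)
        then show False using z False by auto
      next
        case True
        then have s: "Stab a" using n by (auto simp: Uns_def Stab_def)
        have "closed (orbit a)" unfolding orbit_Stab[OF s] by (rule closed_inv)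
        then have "0 \<in> orbit a" using z closure_closed by metis
        then show False using s unfolding orbit_Stab[OF s] by (auto simp: Stab_def)
      qed
    qed
  qed
  then show ?thesis using assms unfolding git_unstable_def git_semistable_def by blast
qed

lemma stable_iff: assumes "a \<noteq> 0" shows "git_stable a \<longleftrightarrow> Stab a"
proof
  assume st: "git_stable a"
  show "Stab a"
  proof (rule ccontr)
    assume n: "\<not> Stab a"
    show False
    proof (cases "a$0 \<noteq> 0 \<or> a$2 \<noteq> 0 \<or> a$3 \<noteq> 0")
      case True
      then show False using not_closed[OF n True] st by (simp add: git_stable_def git_polystable_def)
    next
      case False
      then show False using Hst_not_stable[of a] st by (simp add: git_stable_def)
    qed
  qed
qed (rule Stab_stable[OF _ assms])

lemma poly_iff: assumes "a \<noteq> 0"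
  shows "git_polystable a \<and> \<not> git_stable a \<longleftrightarrow> (\<exists>c. c \<noteq> 0 \<and> a = c *s Hstar)"
proof
  assume h: "git_polystable a \<and> \<not> git_stable a"
  then have n: "\<not> Stab a" using stable_iff[OF assms] by simp
  have "\<not> (a$0 \<noteq> 0 \<or> a$2 \<noteq> 0 \<or> a$3 \<noteq> 0)" using not_closed[OF n] h by (auto simp: git_polystable_def)
  then have z: "a$0 = 0" "a$2 = 0" "a$3 = 0" by auto
  then have "a$1 \<noteq> 0" using assms by (auto simp: vec4_eq)
  moreover have "a = (a$1) *s Hstar" using z by (simp add: vec4_eq Hstar_def axis_def)
  ultimately show "\<exists>c. c \<noteq> 0 \<and> a = c *s Hstar" by blast
next
  assume "\<exists>c. c \<noteq> 0 \<and> a = c *s Hstar"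
  then obtain c where c: "a = c *s Hstar" by blast
  then have z: "a$0 = 0" "a$2 = 0" "a$3 = 0" by (simp_all add: Hstar_def axis_def)
  have "closed (orbit a)" using Hst_orbit[OF z] by simp
  then show "git_polystable a \<and> \<not> git_stable a"
    using assms Hst_not_stable[OF z] by (simp add: git_polystable_def git_stable_def)
qed




lemma gradF_nth: "gradF x $ 0 = x$2*x$3" "gradF x $ 1 = - 3*(x$1)^2"
  "gradF x $ 2 = x$0*x$3" "gradF x $ 3 = x$0*x$2"
  by (simp_all add: gradF_def)

lemma singS_iff: "x \<in> singS \<longleftrightarrow> x$1 = 0 \<and> x$2*x$3 = 0 \<and> x$0*x$3 = 0 \<and> x$0*x$2 = 0"
proof -
  have "gradF x = 0 \<longleftrightarrow> x$1 = 0 \<and> x$2*x$3 = 0 \<and> x$0*x$3 = 0 \<and> x$0*x$2 = 0"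
    unfolding vec4_eq gradF_nth by auto
  moreover have "x$1 = 0 \<and> x$2*x$3 = 0 \<Longrightarrow> Fcub x = 0" by (simp add: Fcub_def)
  ultimately show ?thesis unfolding singS_def by auto
qed

lemma sing_zero: assumes "x \<in> singS" "x \<noteq> 0" "lf a x = 0" shows "a$0 = 0 \<or> a$2 = 0 \<or> a$3 = 0"
proof -
  have s: "x$1 = 0" "x$2*x$3 = 0" "x$0*x$3 = 0" "x$0*x$2 = 0" using assms(1) singS_iff by auto
  have "x$0 \<noteq> 0 \<or> x$2 \<noteq> 0 \<or> x$3 \<noteq> 0" using assms(2) s(1) by (auto simp: vec4_eq)
  then show ?thesis
  proof (elim disjE)
    assume h: "x$0 \<noteq> 0"
    then have "x$2 = 0" "x$3 = 0" using s by auto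
    then show ?thesis using assms(3) h s(1) by (simp add: lf4)
  next
    assume h: "x$2 \<noteq> 0"
    then have "x$0 = 0" "x$3 = 0" using s by auto
    then show ?thesis using assms(3) h s(1) by (simp add: lf4)
  next
    assume h: "x$3 \<noteq> 0"
    then have "x$0 = 0" "x$2 = 0" using s by auto
    then show ?thesis using assms(3) h s(1) by (simp add: lf4)
  qed
qed

lemma axis_sing: "j = 0 \<or> j = 2 \<or> j = 3 \<Longrightarrow> axis j (1::complex) \<in> singS"
  unfolding singS_iff by (auto simp: axis_def)

lemma axis_lf: "lf a (axis j (1::complex)) = a$j"
  unfolding lf_def axis_def by (simp add: if_distrib cong: if_cong)

lemma axis_nz: "axis j (1::complex) \<noteq> 0"
  by (simp add: axis_def vec_eq_iff)

lemma stab_sing: "(\<forall>x. x \<noteq> 0 \<and> x \<in> singS \<longrightarrow> lf a x \<noteq> 0) \<longleftrightarrow> Stab a"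
proof
  assume h: "\<forall>x. x \<noteq> 0 \<and> x \<in> singS \<longrightarrow> lf a x \<noteq> 0"
  have "a$j \<noteq> 0" if "j = 0 \<or> j = 2 \<or> j = 3" for j
    using h[rule_format, of "axis j 1"] axis_sing[OF that] axis_nz axis_lf by metis
  then show "Stab a" unfolding Stab_def by blast
next
  assume "Stab a"
  then show "\<forall>x. x \<noteq> 0 \<and> x \<in> singS \<longrightarrow> lf a x \<noteq> 0" using sing_zero unfolding Stab_def by blast
qed




definition row3 :: "complex \<Rightarrow> complex \<Rightarrow> complex \<Rightarrow> complex^3" where
  "row3 x y z = (\<chi> j. if j = 0 then x else if j = 1 then y else z)"
definition mat43 :: "complex^3 \<Rightarrow> complex^3 \<Rightarrow> complex^3 \<Rightarrow> complex^3 \<Rightarrow> complex^3^4" where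
  "mat43 r0 r1 r2 r3 = (\<chi> i. if i = 0 then r0 else if i = 1 then r1 else if i = 2 then r2 else r3)"

lemma row3_nth[simp]: "row3 x y z $ 0 = x" "row3 x y z $ 1 = y" "row3 x y z $ 2 = z"
  by (simp_all add: row3_def)

lemma mat43_mv[simp]:
  "(mat43 r0 r1 r2 r3 *v u)$0 = r0$0*u$0 + r0$1*u$1 + r0$2*u$2"
  "(mat43 r0 r1 r2 r3 *v u)$1 = r1$0*u$0 + r1$1*u$1 + r1$2*u$2"
  "(mat43 r0 r1 r2 r3 *v u)$2 = r2$0*u$0 + r2$1*u$1 + r2$2*u$2"
  "(mat43 r0 r1 r2 r3 *v u)$3 = r3$0*u$0 + r3$1*u$1 + r3$2*u$2"
  by (simp_all add: mv3 mat43_def)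

lemma Fcub4: "Fcub y = y$0*y$2*y$3 - (y$1)^3" by (simp add: Fcub_def)

lemma chart_intro:
  assumes "\<And>u. N (M *v u) = u" "\<And>x. lf a x = 0 \<Longrightarrow> M *v N x = x" "\<And>u. lf a (M *v u) = 0"
  shows "plane_chart a M"
  unfolding plane_chart_def
proof
  show "inj (\<lambda>u. M *v u)" by (metis assms(1) injI)
  show "range (\<lambda>u. M *v u) = {x. lf a x = 0}"
  proof
    show "range (\<lambda>u. M *v u) \<subseteq> {x. lf a x = 0}" using assms(3) by auto
    show "{x. lf a x = 0} \<subseteq> range (\<lambda>u. M *v u)"
    proof
      fix x assume "x \<in> {x. lf a x = 0}"
      then have "M *v N x = x" using assms(2) by simp
      then show "x \<in> range (\<lambda>u. M *v u)" by (metis rangeI)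
    qed
  qed
qed

lemma cusp0: assumes "a$1 = 0" "a$0 = 0" "a$2 \<noteq> 0" "a$3 \<noteq> 0" shows "cuspidal_section a"
proof -
  let ?M = "mat43 (row3 0 0 (-(a$3/a$2))) (row3 1 0 0) (row3 0 1 0) (row3 0 (-(a$2/a$3)) 0)"
  have "plane_chart a ?M"
  proof (rule chart_intro[where N="\<lambda>x. row3 (x$1) (x$2) (-(a$2/a$3)*x$0)"])
    fix u show "row3 ((?M *v u)$1) ((?M *v u)$2) (-(a$2/a$3)*(?M *v u)$0) = u"
      using assms by (simp add: vec3_eq)
  next
    fix x assume "lf a x = 0"
    then have "a$2*x$2 + a$3*x$3 = 0" using assms by (simp add: lf4)
    then have "a$3*x$3 = -(a$2*x$2)" by (simp add: add_eq_0_iff)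
    then have "x$3 = -(a$2/a$3)*x$2" using assms by (simp add: field_simps)
    then show "?M *v row3 (x$1) (x$2) (-(a$2/a$3)*x$0) = x" using assms by (simp add: vec4_eq)
  next
    fix u show "lf a (?M *v u) = 0" using assms by (simp add: lf4 field_simps)
  qed
  moreover have "\<forall>u. Fcub (?M *v u) = 1 * ((u $ 1) ^ 2 * u $ 2 - (u $ 0) ^ 3)"
    using assms by (simp add: Fcub4 field_simps power2_eq_square)
  ultimately show ?thesis unfolding cuspidal_section_def by (intro exI[of _ ?M] exI[of _ 1]) simp
qed

lemma cusp2: assumes "a$1 = 0" "a$2 = 0" "a$0 \<noteq> 0" "a$3 \<noteq> 0" shows "cuspidal_section a"
proof -
  let ?M = "mat43 (row3 0 1 0) (row3 1 0 0) (row3 0 0 (-(a$3/a$0))) (row3 0 (-(a$0/a$3)) 0)"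
  have "plane_chart a ?M"
  proof (rule chart_intro[where N="\<lambda>x. row3 (x$1) (x$0) (-(a$0/a$3)*x$2)"])
    fix u show "row3 ((?M *v u)$1) ((?M *v u)$0) (-(a$0/a$3)*(?M *v u)$2) = u"
      using assms by (simp add: vec3_eq)
  next
    fix x assume "lf a x = 0"
    then have "a$0*x$0 + a$3*x$3 = 0" using assms by (simp add: lf4)
    then have "a$3*x$3 = -(a$0*x$0)" by (simp add: add_eq_0_iff)
    then have "x$3 = -(a$0/a$3)*x$0" using assms by (simp add: field_simps)
    then show "?M *v row3 (x$1) (x$0) (-(a$0/a$3)*x$2) = x" using assms by (simp add: vec4_eq)
  next
    fix u show "lf a (?M *v u) = 0" using assms by (simp add: lf4 field_simps)
  qed
  moreover have "\<forall>u. Fcub (?M *v u) = 1 * ((u $ 1) ^ 2 * u $ 2 - (u $ 0) ^ 3)"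
    using assms by (simp add: Fcub4 field_simps power2_eq_square)
  ultimately show ?thesis unfolding cuspidal_section_def by (intro exI[of _ ?M] exI[of _ 1]) simp
qed

lemma cusp3: assumes "a$1 = 0" "a$3 = 0" "a$0 \<noteq> 0" "a$2 \<noteq> 0" shows "cuspidal_section a"
proof -
  let ?M = "mat43 (row3 0 1 0) (row3 1 0 0) (row3 0 (-(a$0/a$2)) 0) (row3 0 0 (-(a$2/a$0)))"
  have "plane_chart a ?M"
  proof (rule chart_intro[where N="\<lambda>x. row3 (x$1) (x$0) (-(a$0/a$2)*x$3)"])
    fix u show "row3 ((?M *v u)$1) ((?M *v u)$0) (-(a$0/a$2)*(?M *v u)$3) = u"
      using assms by (simp add: vec3_eq)
  next
    fix x assume "lf a x = 0"
    then have "a$0*x$0 + a$2*x$2 = 0" using assms by (simp add: lf4)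
    then have "a$2*x$2 = -(a$0*x$0)" by (simp add: add_eq_0_iff)
    then have "x$2 = -(a$0/a$2)*x$0" using assms by (simp add: field_simps)
    then show "?M *v row3 (x$1) (x$0) (-(a$0/a$2)*x$3) = x" using assms by (simp add: vec4_eq)
  next
    fix u show "lf a (?M *v u) = 0" using assms by (simp add: lf4 field_simps)
  qed
  moreover have "\<forall>u. Fcub (?M *v u) = 1 * ((u $ 1) ^ 2 * u $ 2 - (u $ 0) ^ 3)"
    using assms by (simp add: Fcub4 field_simps power2_eq_square)
  ultimately show ?thesis unfolding cuspidal_section_def by (intro exI[of _ ?M] exI[of _ 1]) simp
qed

lemma triple0: assumes "a$1 = 0" "a$2 = 0" "a$3 = 0" "a$0 \<noteq> 0" shows "triple_line_section a"
proof -
  let ?M = "mat43 (row3 0 0 0) (row3 1 0 0) (row3 0 1 0) (row3 0 0 1)"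
  have "plane_chart a ?M"
  proof (rule chart_intro[where N="\<lambda>x. row3 (x$1) (x$2) (x$3)"])
    fix u show "row3 ((?M *v u)$1) ((?M *v u)$2) ((?M *v u)$3) = u" by (simp add: vec3_eq)
  next
    fix x assume "lf a x = 0"
    then have "x$0 = 0" using assms by (simp add: lf4)
    then show "?M *v row3 (x$1) (x$2) (x$3) = x" by (simp add: vec4_eq)
  next
    fix u show "lf a (?M *v u) = 0" using assms by (simp add: lf4)
  qed
  moreover have "\<forall>u. Fcub (?M *v u) = (-1) * (u $ 0) ^ 3" by (simp add: Fcub4)
  ultimately show ?thesis unfolding triple_line_section_def by (intro exI[of _ ?M] exI[of _ "-1"]) simp
qed

lemma triple2: assumes "a$1 = 0" "a$0 = 0" "a$3 = 0" "a$2 \<noteq> 0" shows "triple_line_section a"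
proof -
  let ?M = "mat43 (row3 0 1 0) (row3 1 0 0) (row3 0 0 0) (row3 0 0 1)"
  have "plane_chart a ?M"
  proof (rule chart_intro[where N="\<lambda>x. row3 (x$1) (x$0) (x$3)"])
    fix u show "row3 ((?M *v u)$1) ((?M *v u)$0) ((?M *v u)$3) = u" by (simp add: vec3_eq)
  next
    fix x assume "lf a x = 0"
    then have "x$2 = 0" using assms by (simp add: lf4)
    then show "?M *v row3 (x$1) (x$0) (x$3) = x" by (simp add: vec4_eq)
  next
    fix u show "lf a (?M *v u) = 0" using assms by (simp add: lf4)
  qed
  moreover have "\<forall>u. Fcub (?M *v u) = (-1) * (u $ 0) ^ 3" by (simp add: Fcub4)
  ultimately show ?thesis unfolding triple_line_section_def by (intro exI[of _ ?M] exI[of _ "-1"]) simp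
qed

lemma triple3: assumes "a$1 = 0" "a$0 = 0" "a$2 = 0" "a$3 \<noteq> 0" shows "triple_line_section a"
proof -
  let ?M = "mat43 (row3 0 1 0) (row3 1 0 0) (row3 0 0 1) (row3 0 0 0)"
  have "plane_chart a ?M"
  proof (rule chart_intro[where N="\<lambda>x. row3 (x$1) (x$0) (x$2)"])
    fix u show "row3 ((?M *v u)$1) ((?M *v u)$0) ((?M *v u)$2) = u" by (simp add: vec3_eq)
  next
    fix x assume "lf a x = 0"
    then have "x$3 = 0" using assms by (simp add: lf4)
    then show "?M *v row3 (x$1) (x$0) (x$2) = x" by (simp add: vec4_eq)
  next
    fix u show "lf a (?M *v u) = 0" using assms by (simp add: lf4)
  qed
  moreover have "\<forall>u. Fcub (?M *v u) = (-1) * (u $ 0) ^ 3" by (simp add: Fcub4)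
  ultimately show ?thesis unfolding triple_line_section_def by (intro exI[of _ ?M] exI[of _ "-1"]) simp
qed

lemma axis_singD: assumes "a$j = 0" "j = 0 \<or> j = 2 \<or> j = 3" shows "axis j (1::complex) \<in> singD a"
proof -
  have s: "axis j (1::complex) \<in> singS" using axis_sing[OF assms(2)] .
  then have "gradF (axis j 1) = 0" "Fcub (axis j 1) = 0" unfolding singS_def by auto
  moreover have "lf 0 v = 0" for v by (simp add: lf_def)
  ultimately show ?thesis unfolding singD_def using assms(1) axis_lf by simp
qed

lemma uns_fwd: assumes "a \<noteq> 0" "Uns a"
  shows "(cuspidal_section a \<and> (\<exists>x. x \<noteq> 0 \<and> x \<in> singD a \<and> x \<in> singS)) \<or> triple_line_section a"
proof -
  have a1: "a$1 = 0" and z: "a$0 = 0 \<or> a$2 = 0 \<or> a$3 = 0" using assms(2) by (auto simp: Uns_def)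
  have w: "\<exists>x. x \<noteq> 0 \<and> x \<in> singD a \<and> x \<in> singS" if "a$j = 0" "j = 0 \<or> j = 2 \<or> j = 3" for j
    using axis_singD[OF that] axis_sing[OF that(2)] axis_nz by blast
  have nz: "\<not> (a$0 = 0 \<and> a$2 = 0 \<and> a$3 = 0)" using assms(1) a1 by (auto simp: vec4_eq)
  show ?thesis
  proof (cases "a$0 = 0")
    case z0: True
    show ?thesis
    proof (cases "a$2 = 0")
      case True then show ?thesis using triple3 a1 z0 nz by blast
    next
      case n2: False
      show ?thesis
      proof (cases "a$3 = 0")
        case True then show ?thesis using triple2 a1 z0 n2 by blast
      next
        case False then show ?thesis using cusp0[OF a1 z0 n2 False] w[of 0] z0 by blast
      qed
    qed
  next
    case n0: False
    show ?thesis
    proof (cases "a$2 = 0")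
      case z2: True
      show ?thesis
      proof (cases "a$3 = 0")
        case True then show ?thesis using triple0 a1 z2 n0 by blast
      next
        case False then show ?thesis using cusp2[OF a1 z2 n0 False] w[of 2] z2 by blast
      qed
    next
      case n2: False
      then have z3: "a$3 = 0" using z n0 by blast
      show ?thesis using cusp3[OF a1 z3 n0 n2] w[of 3] z3 by blast
    qed
  qed
qed




lemma exp3:
  fixes x0 x1 x2 x3 p0 p1 p2 p3 K :: complex
  assumes "(x0+p0)*(x2+p2)*(x3+p3) - (x1+p1)^3 = x0*x2*x3 - x1^3 + K"
    "(x0-p0)*(x2-p2)*(x3-p3) - (x1-p1)^3 = x0*x2*x3 - x1^3 - K"
    "(x0+2*p0)*(x2+2*p2)*(x3+2*p3) - (x1+2*p1)^3 = x0*x2*x3 - x1^3 + 2*K"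
  shows "x0*p2*p3 + x2*p0*p3 + x3*p0*p2 - 3*x1*p1^2 = 0"
    "p0*p2*p3 - p1^3 = 0"
    "p0*x2*x3 + p2*x0*x3 + p3*x0*x2 - 3*p1*x1^2 = K"
proof -
  define A where "A = p0*x2*x3 + p2*x0*x3 + p3*x0*x2 - 3*p1*x1^2"
  define B where "B = x0*p2*p3 + x2*p0*p3 + x3*p0*p2 - 3*x1*p1^2"
  define C where "C = p0*p2*p3 - p1^3"
  have e1: "A + B + C = K" using assms(1) unfolding A_def B_def C_def by algebra
  have e2: "- A + B - C = - K" using assms(2) unfolding A_def B_def C_def by algebra
  have e3: "2*A + 4*B + 8*C = 2*K" using assms(3) unfolding A_def B_def C_def by algebra
  have "2*B = (A + B + C) + (- A + B - C)" by (simp add: algebra_simps)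
  then have "2*B = 0" using e1 e2 by simp
  then have b: "B = 0" by simp
  have e1': "A + C = K" using e1 b by simp
  have e3': "2*A + 8*C = 2*K" using e3 b by simp
  have "6*C = (2*A + 8*C) - 2*(A + C)" by algebra
  also have "\<dots> = 2*K - 2*K" by (simp only: e1' e3')
  finally have "6*C = 0" by simp
  then have cc: "C = 0" by simp
  have "A = K" using e1 b cc by simp
  then show "x0*p2*p3 + x2*p0*p3 + x3*p0*p2 - 3*x1*p1^2 = 0" "p0*p2*p3 - p1^3 = 0"
    "p0*x2*x3 + p2*x0*x3 + p3*x0*x2 - 3*p1*x1^2 = K" using b cc unfolding A_def B_def C_def by auto
qed


lemma pc_range: "plane_chart a M \<Longrightarrow> lf a x = 0 \<Longrightarrow> \<exists>u. x = M *v u"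
  unfolding plane_chart_def by blast
lemma pc_in: "plane_chart a M \<Longrightarrow> lf a (M *v u) = 0"
  unfolding plane_chart_def by blast
lemma pc_nz: "plane_chart a M \<Longrightarrow> u \<noteq> 0 \<Longrightarrow> M *v u \<noteq> 0"
  unfolding plane_chart_def by (metis injD matrix_vector_mult_0_right)
lemma mv_lin: "(M::complex^3^4) *v (u + t *s v) = M *v u + t *s (M *v v)"
  by (simp add: vec_eq_iff mv3 algebra_simps)
lemma mv_add: "(M::complex^3^4) *v (u + v) = M *v u + M *v v"
  by (simp add: vec_eq_iff mv3 algebra_simps)

definition v4 :: "complex \<Rightarrow> complex \<Rightarrow> complex \<Rightarrow> complex \<Rightarrow> complex^4" where
  "v4 x0 x1 x2 x3 = (\<chi> i. if i = 0 then x0 else if i = 1 then x1 else if i = 2 then x2 else x3)"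
lemma v4_nth[simp]: "v4 x0 x1 x2 x3 $ 0 = x0" "v4 x0 x1 x2 x3 $ 1 = x1"
  "v4 x0 x1 x2 x3 $ 2 = x2" "v4 x0 x1 x2 x3 $ 3 = x3"
  by (simp_all add: v4_def)

lemma cusp_key:
  assumes FM: "\<And>u. Fcub (M *v u) = c * ((u$1)^2 * u$2 - (u$0)^3)"
    and p: "p = M *v row3 0 0 1"
  shows "(M*v u)$0*p$2*p$3 + (M*v u)$2*p$0*p$3 + (M*v u)$3*p$0*p$2 - 3*(M*v u)$1*(p$1)^2 = 0"
        "p$0*p$2*p$3 - (p$1)^3 = 0"
        "p$0*(M*v u)$2*(M*v u)$3 + p$2*(M*v u)$0*(M*v u)$3 + p$3*(M*v u)$0*(M*v u)$2 - 3*p$1*((M*v u)$1)^2 = c*(u$1)^2"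
proof -
  have sh: "Fcub (M *v u + s *s p) = Fcub (M *v u) + s * (c*(u$1)^2)" for s
  proof -
    have "M *v u + s *s p = M *v (u + s *s row3 0 0 1)" by (simp add: mv_lin p)
    then have "Fcub (M *v u + s *s p) = c * ((u$1)^2 * (u$2 + s) - (u$0)^3)" by (simp add: FM)
    then show ?thesis by (simp add: FM algebra_simps)
  qed
  let ?x0 = "(M*v u)$0" and ?x1 = "(M*v u)$1" and ?x2 = "(M*v u)$2" and ?x3 = "(M*v u)$3"
  have h1: "(?x0+p$0)*(?x2+p$2)*(?x3+p$3) - (?x1+p$1)^3 = ?x0*?x2*?x3 - ?x1^3 + c*(u$1)^2"
    using sh[of 1] by (simp add: Fcub4)
  have h2: "(?x0-p$0)*(?x2-p$2)*(?x3-p$3) - (?x1-p$1)^3 = ?x0*?x2*?x3 - ?x1^3 - c*(u$1)^2"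
    using sh[of "-1"] by (simp add: Fcub4)
  have h3: "(?x0+2*p$0)*(?x2+2*p$2)*(?x3+2*p$3) - (?x1+2*p$1)^3 = ?x0*?x2*?x3 - ?x1^3 + 2*(c*(u$1)^2)"
    using sh[of 2] by (simp add: Fcub4)
  show "(M*v u)$0*p$2*p$3 + (M*v u)$2*p$0*p$3 + (M*v u)$3*p$0*p$2 - 3*(M*v u)$1*(p$1)^2 = 0"
        "p$0*p$2*p$3 - (p$1)^3 = 0"
        "p$0*(M*v u)$2*(M*v u)$3 + p$2*(M*v u)$0*(M*v u)$3 + p$3*(M*v u)$0*(M*v u)$2 - 3*p$1*((M*v u)$1)^2 = c*(u$1)^2"
    using exp3[OF h1 h2 h3] by auto
qed




lemma cusp_a1: assumes "cuspidal_section a" "a$1 \<noteq> 0" "a$0 = 0 \<or> a$2 = 0 \<or> a$3 = 0" shows False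
proof -
  obtain M c where pc: "plane_chart a M" and c: "c \<noteq> 0"
    and FM: "\<And>u. Fcub (M *v u) = c * ((u $ 1) ^ 2 * u $ 2 - (u $ 0) ^ 3)"
    using assms(1) unfolding cuspidal_section_def by blast
  define p where "p = M *v row3 0 0 1"
  note K = cusp_key[OF FM p_def]
  have Fp: "p$0*p$2*p$3 - (p$1)^3 = 0" by (rule K(2))
  define z0 where "z0 = v4 1 (-(a$0/a$1)) 0 0"
  define z2 where "z2 = v4 0 (-(a$2/a$1)) 1 0"
  define z3 where "z3 = v4 0 (-(a$3/a$1)) 0 1"
  have "lf a z0 = 0" "lf a z2 = 0" "lf a z3 = 0" using assms(2) by (simp_all add: lf4 z0_def z2_def z3_def field_simps)
  then obtain u0 u2 u3 where u: "z0 = M *v u0" "z2 = M *v u2" "z3 = M *v u3" using pc_range[OF pc] by metis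
  have B0: "p$2*p$3 + 3*(a$0/a$1)*(p$1)^2 = 0" using K(1)[of u0] unfolding u(1)[symmetric] by (simp add: z0_def)
  have B2: "p$0*p$3 + 3*(a$2/a$1)*(p$1)^2 = 0" using K(1)[of u2] unfolding u(2)[symmetric] by (simp add: z2_def)
  have B3: "p$0*p$2 + 3*(a$3/a$1)*(p$1)^2 = 0" using K(1)[of u3] unfolding u(3)[symmetric] by (simp add: z3_def)
  have p1: "p$1 = 0"
    using assms(3)
  proof (elim disjE)
    assume "a$0 = 0"
    then have h: "p$2*p$3 = 0" using B0 by simp
    have "(p$1)^3 = p$0*(p$2*p$3)" using Fp by (simp add: mult.assoc)
    also have "\<dots> = 0" by (simp only: h mult_zero_right)
    finally show "p$1 = 0" by simp
  next
    assume "a$2 = 0"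
    then have h: "p$0*p$3 = 0" using B2 by simp
    have "(p$1)^3 = p$2*(p$0*p$3)" using Fp by (simp add: ac_simps)
    also have "\<dots> = 0" by (simp only: h mult_zero_right)
    finally show "p$1 = 0" by simp
  next
    assume "a$3 = 0"
    then have h: "p$0*p$2 = 0" using B3 by simp
    have "(p$1)^3 = (p$0*p$2)*p$3" using Fp by simp
    also have "\<dots> = 0" by (simp only: h mult_zero_left)
    finally show "p$1 = 0" by simp
  qed
  have A0: "u0$1 = 0" using K(3)[of u0] c p1 unfolding u(1)[symmetric] by (simp add: z0_def)
  have A2: "u2$1 = 0" using K(3)[of u2] c p1 unfolding u(2)[symmetric] by (simp add: z2_def)
  have A3: "u3$1 = 0" using K(3)[of u3] c p1 unfolding u(3)[symmetric] by (simp add: z3_def)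
  have s23: "z2 + z3 = M *v (u2 + u3)" using u by (simp add: mv_add)
  have s03: "z0 + z3 = M *v (u0 + u3)" using u by (simp add: mv_add)
  have s02: "z0 + z2 = M *v (u0 + u2)" using u by (simp add: mv_add)
  have q0: "p$0 = 0" using K(3)[of "u2 + u3"] p1 A2 A3 unfolding s23[symmetric] by (simp add: z2_def z3_def)
  have q2: "p$2 = 0" using K(3)[of "u0 + u3"] p1 A0 A3 unfolding s03[symmetric] by (simp add: z0_def z3_def)
  have q3: "p$3 = 0" using K(3)[of "u0 + u2"] p1 A0 A2 unfolding s02[symmetric] by (simp add: z0_def z2_def)
  have "p = 0" using p1 q0 q2 q3 by (simp add: vec4_eq)
  moreover have "row3 0 0 1 \<noteq> 0" by (simp add: vec3_eq)
  ultimately show False using pc_nz[OF pc] p_def by metis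
qed




lemma triple_a1: assumes "triple_line_section a" "a$1 \<noteq> 0" shows False
proof -
  obtain M c where pc: "plane_chart a M" and c: "c \<noteq> 0"
    and FM: "\<And>u. Fcub (M *v u) = c * (u $ 0) ^ 3"
    using assms(1) unfolding triple_line_section_def by blast
  define v where "v = (if M$1$1 = 0 \<and> M$1$2 = 0 then row3 0 1 0 else row3 0 (M$1$2) (-(M$1$1)))"
  have v0: "v$0 = 0" by (simp add: v_def)
  have vnz: "v \<noteq> 0" by (auto simp: v_def vec3_eq)
  define w where "w = M *v v"
  have wnz: "w \<noteq> 0" using pc_nz[OF pc vnz] w_def by simp
  have w1: "w$1 = 0" by (simp add: w_def v_def mv3 algebra_simps)
  have inv: "Fcub (x + w) = Fcub x" if lx: "lf a x = 0" for x
  proof -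
    obtain u where u: "x = M *v u" using pc_range[OF pc lx] by blast
    have "x + w = M *v (u + v)" by (simp add: u w_def mv_add)
    then have "Fcub (x + w) = c * (u$0)^3" by (simp add: FM v0)
    then show ?thesis by (simp add: u FM)
  qed
  have G: "(y0 + w$0)*(y2+w$2)*(y3+w$3) = y0*y2*y3" for y0 y2 y3
  proof -
    define x where "x = v4 y0 (-(a$0*y0 + a$2*y2 + a$3*y3)/a$1) y2 y3"
    have "lf a x = 0" using assms(2) by (simp add: x_def lf4 field_simps)
    from inv[OF this] show ?thesis by (simp add: Fcub4 x_def w1)
  qed
  have "w$0 = 0" using G[of 0 "1 - w$2" "1 - w$3"] by simp
  moreover have "w$2 = 0" using G[of "1 - w$0" 0 "1 - w$3"] by simp
  moreover have "w$3 = 0" using G[of "1 - w$0" "1 - w$2" 0] by simp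
  ultimately have "w = 0" using w1 by (simp add: vec4_eq)
  then show False using wnz by simp
qed

lemma triple_a0: assumes "triple_line_section a" "a$1 = 0" shows "a$0 = 0 \<or> a$2 = 0 \<or> a$3 = 0"
proof (rule ccontr)
  assume n: "\<not> (a$0 = 0 \<or> a$2 = 0 \<or> a$3 = 0)"
  obtain M c where pc: "plane_chart a M" and c: "c \<noteq> 0"
    and FM: "\<And>u. Fcub (M *v u) = c * (u $ 0) ^ 3"
    using assms(1) unfolding triple_line_section_def by blast
  define e1 where "e1 = v4 0 1 0 0"
  have "lf a e1 = 0" using assms(2) by (simp add: e1_def lf4)
  then obtain ue where ue: "e1 = M *v ue" using pc_range[OF pc] by blast
  have "Fcub e1 = -1" by (simp add: e1_def Fcub4)
  then have "c * (ue$0)^3 = -1" using FM ue by simp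
  then have mu: "ue$0 \<noteq> 0" by auto
  define x where "x = v4 (1/a$0) 0 (1/a$2) (-2/a$3)"
  have "lf a x = 0" using n assms(2) by (simp add: x_def lf4 field_simps)
  then obtain u where u: "x = M *v u" using pc_range[OF pc] by blast
  define P where "P = x$0*x$2*x$3"
  have Pnz: "P \<noteq> 0" using n by (simp add: P_def x_def)
  have sh: "Fcub (x + t *s e1) = c * (u$0 + t * ue$0)^3" for t
  proof -
    have "x + t *s e1 = M *v (u + t *s ue)" by (simp add: u ue mv_lin)
    then show ?thesis by (simp add: FM)
  qed
  have ea: "P = c * (u$0)^3"
  proof -
    have "Fcub x = c*(u$0)^3" using FM[of u] u by simp
    moreover have "Fcub x = P" by (simp add: Fcub4 P_def x_def)
    ultimately show ?thesis by simp
  qed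
  have eb: "P - 1 = c * (u$0 + ue$0)^3"
  proof -
    have "Fcub (x + 1 *s e1) = P - 1" by (simp add: Fcub4 P_def x_def e1_def)
    then show ?thesis using sh[of 1] by simp
  qed
  have ec: "P + 1 = c * (u$0 - ue$0)^3"
  proof -
    have "Fcub (x + (-1) *s e1) = P + 1" by (simp add: Fcub4 P_def x_def e1_def)
    then show ?thesis using sh[of "-1"] by simp
  qed
  have "6*c*u$0*(ue$0)^2 = c * (u$0 + ue$0)^3 + c * (u$0 - ue$0)^3 - 2*(c * (u$0)^3)" by algebra
  also have "\<dots> = (P - 1) + (P + 1) - 2*P" by (simp only: ea[symmetric] eb[symmetric] ec[symmetric])
  also have "\<dots> = 0" by simp
  finally have "u$0 = 0" using c mu by simp
  then have "P = 0" using ea by simp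
  then show False using Pnz by simp
qed



theorem corollary4p13:
  fixes a :: "complex^4"
  assumes "a \<noteq> 0"
  shows "(git_stable a \<longleftrightarrow> (\<forall>x. x \<noteq> 0 \<and> x \<in> singS \<longrightarrow> lf a x \<noteq> 0))
       \<and> (git_polystable a \<and> \<not> git_stable a \<longleftrightarrow> (\<exists>c. c \<noteq> 0 \<and> a = c *s Hstar))
       \<and> (git_unstable a \<longleftrightarrow>
            (cuspidal_section a \<and> (\<exists>x. x \<noteq> 0 \<and> x \<in> singD a \<and> x \<in> singS))
            \<or> triple_line_section a)"
proof -
  have geo: "git_unstable a \<longleftrightarrow>
            (cuspidal_section a \<and> (\<exists>x. x \<noteq> 0 \<and> x \<in> singD a \<and> x \<in> singS))
            \<or> triple_line_section a"
  proof
    assume "git_unstable a"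
    then have "Uns a" using unstable_iff[OF assms] by simp
    then show "(cuspidal_section a \<and> (\<exists>x. x \<noteq> 0 \<and> x \<in> singD a \<and> x \<in> singS))
            \<or> triple_line_section a" using uns_fwd[OF assms] by blast
  next
    assume h: "(cuspidal_section a \<and> (\<exists>x. x \<noteq> 0 \<and> x \<in> singD a \<and> x \<in> singS))
            \<or> triple_line_section a"
    have "Uns a"
    proof (cases "triple_line_section a")
      case True
      then have a1: "a$1 = 0" using triple_a1 by blast
      then show ?thesis using triple_a0[OF True a1] by (simp add: Uns_def)
    next
      case False
      then have cs: "cuspidal_section a" and ex: "\<exists>x. x \<noteq> 0 \<and> x \<in> singD a \<and> x \<in> singS" using h by auto
      then obtain x where x: "x \<noteq> 0" "x \<in> singD a" "x \<in> singS" by blast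
      have "lf a x = 0" using x(2) by (simp add: singD_def)
      then have z: "a$0 = 0 \<or> a$2 = 0 \<or> a$3 = 0" using sing_zero x by blast
      then have "a$1 = 0" using cusp_a1[OF cs] by blast
      then show ?thesis using z by (simp add: Uns_def)
    qed
    then show "git_unstable a" using unstable_iff[OF assms] by simp
  qed
  show ?thesis using stable_iff[OF assms] stab_sing[of a] poly_iff[OF assms] geo by blast
qed

end
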